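(* Let $G$ be a graph with a length-function $\ell$ and let $T\subseteq G$ be a tree. If $T$ is $2$-geodesic in $G$, then $T$ is fully geodesic in $G$.
   Context: All graphs are finite; parallel edges are allowed, loops are not. A length-function on a graph $G$ is a map $\ell:E(G)\to\mathbb{R}^+$ (strictly positive reals); for a subgraph $H$ put $\ell(H)=\sum_{e\in E(H)}\ell(e)$, and subgraphs carry the restricted length-function. For $A\subseteq V(G)$, the Steiner distance $\mathrm{sd}_G(A)$ is the minimum of $\ell(S)$ over all connected subgraphs $S\subseteq G$ with $A\subseteq V(S)$ ($\infty$ if none exists). A subgraph $H\subseteq G$ is $k$-geodesic in $G$ if $\mathrm{sd}_H(A)=\mathrm{sd}_G(A)$ for every $A\subseteq V(H)$ with $|A|\le k$; it is fully geodesic in $G$ if it is $k$-geodesic for every $k\in\mathbb{N}$. *)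

theory Defs
  imports Main "HOL-Library.Extended_Real"
begin

text \<open>A finite multigraph (parallel edges allowed, no loops) is given by a vertex set V,
an edge set E and an incidence map ends assigning to each edge its two distinct endpoints.\<close>

definition multigraph :: "'v set \<Rightarrow> 'e set \<Rightarrow> ('e \<Rightarrow> 'v set) \<Rightarrow> bool" where
  "multigraph V E ends \<longleftrightarrow> finite V \<and> finite E \<and>
     (\<forall>e\<in>E. ends e \<subseteq> V \<and> card (ends e) = 2)"

definition length_function :: "'e set \<Rightarrow> ('e \<Rightarrow> real) \<Rightarrow> bool" where
  "length_function E l \<longleftrightarrow> (\<forall>e\<in>E. l e > 0)"

definition subgraph :: "'v set \<Rightarrow> 'e set \<Rightarrow> 'v set \<Rightarrow> 'e set \<Rightarrow> ('e \<Rightarrow> 'v set) \<Rightarrow> bool" where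
  "subgraph VH EH V E ends \<longleftrightarrow> VH \<subseteq> V \<and> EH \<subseteq> E \<and> (\<forall>e\<in>EH. ends e \<subseteq> VH)"

definition adj :: "'e set \<Rightarrow> ('e \<Rightarrow> 'v set) \<Rightarrow> ('v \<times> 'v) set" where
  "adj E ends = {(u, v). \<exists>e\<in>E. ends e = {u, v}}"

definition connected_graph :: "'v set \<Rightarrow> 'e set \<Rightarrow> ('e \<Rightarrow> 'v set) \<Rightarrow> bool" where
  "connected_graph V E ends \<longleftrightarrow> V \<noteq> {} \<and> (\<forall>u\<in>V. \<forall>v\<in>V. (u, v) \<in> (adj E ends)\<^sup>*)"

text \<open>A cycle: k \<ge> 2 distinct vertices and k distinct edges, edge i joining vertex i and i+1 (mod k).
  For k = 2 this is a pair of parallel edges.\<close>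
definition has_cycle :: "'v set \<Rightarrow> 'e set \<Rightarrow> ('e \<Rightarrow> 'v set) \<Rightarrow> bool" where
  "has_cycle V E ends \<longleftrightarrow> (\<exists>vs es. length vs = length es \<and> length vs \<ge> 2 \<and>
      distinct vs \<and> distinct es \<and> set vs \<subseteq> V \<and> set es \<subseteq> E \<and>
      (\<forall>i < length vs. ends (es ! i) = {vs ! i, vs ! ((i + 1) mod length vs)}))"

definition is_tree :: "'v set \<Rightarrow> 'e set \<Rightarrow> ('e \<Rightarrow> 'v set) \<Rightarrow> bool" where
  "is_tree V E ends \<longleftrightarrow> connected_graph V E ends \<and> \<not> has_cycle V E ends"

text \<open>Steiner distance of A in the graph (V,E): infimum of l(S) over connected subgraphs S
  containing A; \<infinity> if there is none.\<close>
definition steiner_dist :: "'v set \<Rightarrow> 'e set \<Rightarrow> ('e \<Rightarrow> 'v set) \<Rightarrow> ('e \<Rightarrow> real) \<Rightarrow> 'v set \<Rightarrow> ereal" where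
  "steiner_dist V E ends l A =
     Inf {ereal (sum l ES) | VS ES. subgraph VS ES V E ends \<and> connected_graph VS ES ends \<and> A \<subseteq> VS}"

definition k_geodesic :: "nat \<Rightarrow> 'v set \<Rightarrow> 'e set \<Rightarrow> 'v set \<Rightarrow> 'e set \<Rightarrow> ('e \<Rightarrow> 'v set) \<Rightarrow> ('e \<Rightarrow> real) \<Rightarrow> bool" where
  "k_geodesic k VH EH V E ends l \<longleftrightarrow>
     (\<forall>A. A \<subseteq> VH \<and> card A \<le> k \<longrightarrow> steiner_dist VH EH ends l A = steiner_dist V E ends l A)"

definition fully_geodesic :: "'v set \<Rightarrow> 'e set \<Rightarrow> 'v set \<Rightarrow> 'e set \<Rightarrow> ('e \<Rightarrow> 'v set) \<Rightarrow> ('e \<Rightarrow> real) \<Rightarrow> bool" where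
  "fully_geodesic VH EH V E ends l \<longleftrightarrow> (\<forall>k. k_geodesic k VH EH V E ends l)"

end

theory Submission
  imports Defs
begin


lemma adj_sym: "sym (adj E ends)"
  unfolding adj_def sym_def by (auto simp: insert_commute)

lemma rt_sym: "(x,y) \<in> (adj E ends)\<^sup>* \<Longrightarrow> (y,x) \<in> (adj E ends)\<^sup>*"
  using symD[OF sym_rtrancl[OF adj_sym[of E ends]]] by blast

lemma adj_mono: "E1 \<subseteq> E2 \<Longrightarrow> adj E1 ends \<subseteq> adj E2 ends"
  unfolding adj_def by auto

lemma rt_mono: "E1 \<subseteq> E2 \<Longrightarrow> (x,y) \<in> (adj E1 ends)\<^sup>* \<Longrightarrow> (x,y) \<in> (adj E2 ends)\<^sup>*"
  using rtrancl_mono[OF adj_mono] by blast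

lemma decomp:
  assumes "(u,x) \<in> (adj ES ends)\<^sup>*" "ends e = {u,w}"
  shows "(u,x) \<in> (adj (ES - {e}) ends)\<^sup>* \<or> (w,x) \<in> (adj (ES-{e}) ends)\<^sup>*"
  using assms(1)
proof (induction rule: rtrancl_induct)
  case base then show ?case by simp
next
  case (step y z)
  then obtain f where f: "f \<in> ES" "ends f = {y,z}" unfolding adj_def by auto
  show ?case
  proof (cases "f = e")
    case True
    then have "z = u \<or> z = w" using f assms(2) by (auto simp: doubleton_eq_iff)
    then show ?thesis by (metis rtrancl.rtrancl_refl)
  next
    case False
    then have "(y,z) \<in> adj (ES - {e}) ends" using f unfolding adj_def by auto
    then show ?thesis using step.IH by (meson rtrancl.rtrancl_into_rtrancl)
  qed
qed

lemma comp_conn: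
  assumes "\<forall>f\<in>ES. ends f \<subseteq> VS" "u \<in> VS"
  shows "connected_graph {x\<in>VS. (u,x)\<in>(adj ES ends)\<^sup>*} {f\<in>ES. ends f \<subseteq> {x\<in>VS. (u,x)\<in>(adj ES ends)\<^sup>*}} ends"
proof -
  define C where "C = {x\<in>VS. (u,x)\<in>(adj ES ends)\<^sup>*}"
  have key: "(u,x) \<in> (adj {f\<in>ES. ends f \<subseteq> C} ends)\<^sup>*" if "(u,x)\<in>(adj ES ends)\<^sup>*" for x
    using that
  proof (induction rule: rtrancl_induct)
    case base then show ?case by simp
  next
    case (step y z)
    then obtain f where f: "f \<in> ES" "ends f = {y,z}" unfolding adj_def by auto
    then have "y \<in> VS" "z \<in> VS" using assms(1) by auto
    then have "ends f \<subseteq> C" using f step(1,2) unfolding C_def by auto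
    then have "(y,z) \<in> adj {f\<in>ES. ends f \<subseteq> C} ends" using f unfolding adj_def by auto
    then show ?case using step.IH by (meson rtrancl.rtrancl_into_rtrancl)
  qed
  have "u \<in> C" using assms(2) unfolding C_def by auto
  moreover have "(x,y) \<in> (adj {f\<in>ES. ends f \<subseteq> C} ends)\<^sup>*" if "x \<in> C" "y \<in> C" for x y
    using key[of x] key[of y] that unfolding C_def by (auto intro: rtrancl_trans rt_sym)
  ultimately show ?thesis unfolding C_def[symmetric] connected_graph_def by auto
qed

lemma conn_union:
  assumes "connected_graph V1 E1 ends" "connected_graph V2 E2 ends" "b \<in> V1" "b \<in> V2"
  shows "connected_graph (V1 \<union> V2) (E1 \<union> E2) ends"
proof -
  have r1: "(x,y) \<in> (adj (E1 \<union> E2) ends)\<^sup>*" if "x \<in> V1" "y \<in> V1" for x y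
    using assms(1) that unfolding connected_graph_def by (auto intro: rt_mono[of E1])
  have r2: "(x,y) \<in> (adj (E1 \<union> E2) ends)\<^sup>*" if "x \<in> V2" "y \<in> V2" for x y
    using assms(2) that unfolding connected_graph_def by (auto intro: rt_mono[of E2])
  show ?thesis unfolding connected_graph_def
  proof (intro conjI ballI)
    show "V1 \<union> V2 \<noteq> {}" using assms(3) by auto
  next
    fix x y assume "x \<in> V1 \<union> V2" "y \<in> V1 \<union> V2"
    then show "(x,y) \<in> (adj (E1 \<union> E2) ends)\<^sup>*"
      using r1[of x b] r1[of b y] r2[of x b] r2[of b y] r1[of x y] r2[of x y] assms(3,4)
      by (meson UnE rtrancl_trans)
  qed
qed

lemma edge_conn:
  assumes "ends e = {u,w}"
  shows "connected_graph {u,w} {e} ends"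
proof -
  have "(u,w) \<in> adj {e} ends" "(w,u) \<in> adj {e} ends" using assms unfolding adj_def by auto
  then show ?thesis unfolding connected_graph_def by auto
qed

lemma single_conn: "connected_graph {v} {} ends"
  unfolding connected_graph_def by auto



fun pcost :: "('v \<Rightarrow> 'v \<Rightarrow> ereal) \<Rightarrow> 'v list \<Rightarrow> ereal" where
  "pcost D (a # b # xs) = D a b + pcost D (b # xs)"
| "pcost D _ = 0"

lemma pcost_append: "pcost D (xs @ y # ys) = pcost D (xs @ [y]) + pcost D (y # ys)"
proof (induction xs)
  case Nil then show ?case by simp
next
  case (Cons a xs)
  then show ?case by (cases xs) (auto simp: add.assoc)
qed

lemma pcost_snoc: "xs \<noteq> [] \<Longrightarrow> pcost D (xs @ [y]) = pcost D xs + D (last xs) y"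
proof (induction xs)
  case Nil then show ?case by simp
next
  case (Cons a xs)
  then show ?case by (cases xs) (auto simp: add.assoc)
qed

lemma pcost_filter:
  assumes tri: "\<And>a b c. D a c \<le> D a b + D b c"
  shows "P a \<Longrightarrow> P (last (a#ys)) \<Longrightarrow> pcost D (filter P (a#ys)) \<le> pcost D (a#ys)"
proof (induction "length ys" arbitrary: a ys rule: less_induct)
  case less
  show ?case
  proof (cases ys)
    case Nil then show ?thesis using less by simp
  next
    case (Cons b rest)
    show ?thesis
    proof (cases "P b")
      case True
      have "pcost D (filter P (b#rest)) \<le> pcost D (b#rest)"
        using less(1)[of rest b] True less(3) Cons by auto
      moreover have "filter P (b#rest) = b # filter P rest" using True by simp
      ultimately show ?thesis using Cons less(2) True by (simp add: add_left_mono)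
    next
      case False
      then obtain c rest' where rc: "rest = c # rest'" using less(3) Cons by (cases rest) auto
      have "pcost D (filter P (a#rest)) \<le> pcost D (a#rest)"
        using less(1)[of rest a] less(2,3) Cons rc by auto
      also have "\<dots> = D a c + pcost D (c#rest')" using rc by simp
      also have "\<dots> \<le> D a b + D b c + pcost D (c#rest')" using tri[of a c b] by (simp add: add_right_mono)
      also have "\<dots> = pcost D (a#ys)" using Cons rc by (simp add: add.assoc)
      finally show ?thesis using Cons False less(2) by simp
    qed
  qed
qed

lemma sd_le:
  "subgraph VS ES V E ends \<Longrightarrow> connected_graph VS ES ends \<Longrightarrow> A \<subseteq> VS \<Longrightarrow>
   steiner_dist V E ends l A \<le> ereal (sum l ES)"
  unfolding steiner_dist_def by (rule Inf_lower) blast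

lemma sd_ge:
  "(\<And>VS ES. subgraph VS ES V E ends \<Longrightarrow> connected_graph VS ES ends \<Longrightarrow> A \<subseteq> VS \<Longrightarrow> x \<le> ereal (sum l ES))
   \<Longrightarrow> x \<le> steiner_dist V E ends l A"
  unfolding steiner_dist_def by (rule Inf_greatest) blast

lemma sd_attain:
  assumes "finite V" "finite E" "subgraph VS ES V E ends" "connected_graph VS ES ends" "A \<subseteq> VS"
  shows "\<exists>VS' ES'. subgraph VS' ES' V E ends \<and> connected_graph VS' ES' ends \<and> A \<subseteq> VS' \<and>
           steiner_dist V E ends l A = ereal (sum l ES')"
proof -
  define X where "X = {ereal (sum l ES) | VS ES. subgraph VS ES V E ends \<and> connected_graph VS ES ends \<and> A \<subseteq> VS}"
  have "X \<subseteq> (\<lambda>(VS,ES). ereal (sum l ES)) ` (Pow V \<times> Pow E)"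
  proof
    fix x assume "x \<in> X"
    then obtain VS ES where x: "x = ereal (sum l ES)" "subgraph VS ES V E ends" unfolding X_def by auto
    then have "(VS,ES) \<in> Pow V \<times> Pow E" unfolding subgraph_def by auto
    then show "x \<in> (\<lambda>(VS,ES). ereal (sum l ES)) ` (Pow V \<times> Pow E)" using x(1) by force
  qed
  moreover have "finite ((\<lambda>(VS,ES). ereal (sum l ES)) ` (Pow V \<times> Pow E))"
    using assms(1,2) by simp
  ultimately have fin: "finite X" by (rule finite_subset)
  have ne: "X \<noteq> {}" using assms(3-5) unfolding X_def by blast
  have "Min X \<in> X" using fin ne by simp
  moreover have "Inf X = Min X"
  proof (rule antisym)
    show "Inf X \<le> Min X" using \<open>Min X \<in> X\<close> by (rule Inf_lower)
    show "Min X \<le> Inf X" using fin ne by (intro Inf_greatest) simp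
  qed
  ultimately have "Inf X \<in> X" by simp
  then show ?thesis unfolding X_def steiner_dist_def by auto
qed

lemma sd_nonneg:
  assumes "\<forall>e\<in>E. l e \<ge> 0"
  shows "0 \<le> steiner_dist V E ends l A"
proof (rule sd_ge)
  fix VS ES assume "subgraph VS ES V E ends"
  then have "ES \<subseteq> E" unfolding subgraph_def by auto
  then show "0 \<le> ereal (sum l ES)" using assms by (auto intro: sum_nonneg)
qed

lemma sd_inf:
  assumes "\<not> (\<exists>VS ES. subgraph VS ES V E ends \<and> connected_graph VS ES ends \<and> A \<subseteq> VS)"
  shows "steiner_dist V E ends l A = \<infinity>"
proof -
  have "{ereal (sum l ES) | VS ES. subgraph VS ES V E ends \<and> connected_graph VS ES ends \<and> A \<subseteq> VS} = {}"
    using assms by auto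
  then show ?thesis unfolding steiner_dist_def by (metis Inf_empty top_ereal_def)
qed

lemma sd_tri:
  assumes "finite V" "finite E" "\<forall>e\<in>E. l e \<ge> 0"
  shows "steiner_dist V E ends l {a,c} \<le> steiner_dist V E ends l {a,b} + steiner_dist V E ends l {b,c}"
proof (cases "\<exists>VS ES. subgraph VS ES V E ends \<and> connected_graph VS ES ends \<and> {a,b} \<subseteq> VS")
  case False
  then show ?thesis using sd_inf[OF False] sd_nonneg[OF assms(3), where V=V and ends=ends and A="{b,c}"] by simp
next
  case T1: True
  show ?thesis
  proof (cases "\<exists>VS ES. subgraph VS ES V E ends \<and> connected_graph VS ES ends \<and> {b,c} \<subseteq> VS")
    case False
    then show ?thesis using sd_inf[OF False] sd_nonneg[OF assms(3), where V=V and ends=ends and A="{a,b}"] by simp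
  next
    case True
    obtain V1 E1 where 1: "subgraph V1 E1 V E ends" "connected_graph V1 E1 ends" "{a,b} \<subseteq> V1"
      "steiner_dist V E ends l {a,b} = ereal (sum l E1)"
      using T1 sd_attain[OF assms(1,2)] by metis
    obtain V2 E2 where 2: "subgraph V2 E2 V E ends" "connected_graph V2 E2 ends" "{b,c} \<subseteq> V2"
      "steiner_dist V E ends l {b,c} = ereal (sum l E2)"
      using True sd_attain[OF assms(1,2)] by metis
    have sg: "subgraph (V1 \<union> V2) (E1 \<union> E2) V E ends" using 1(1) 2(1) unfolding subgraph_def by auto
    have cg: "connected_graph (V1 \<union> V2) (E1 \<union> E2) ends" using conn_union[OF 1(2) 2(2)] 1(3) 2(3) by auto
    have fe: "finite E1" "finite E2" using 1(1) 2(1) assms(2) unfolding subgraph_def by (auto intro: finite_subset)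
    have nn: "0 \<le> sum l (E1 \<inter> E2)" using 1(1) assms(3) unfolding subgraph_def by (auto intro: sum_nonneg)
    have "sum l (E1 \<union> E2) \<le> sum l E1 + sum l E2"
      using sum_Un[OF fe, of l] nn by simp
    moreover have "{a,c} \<subseteq> V1 \<union> V2" using 1(3) 2(3) by auto
    ultimately have "steiner_dist V E ends l {a,c} \<le> ereal (sum l E1 + sum l E2)"
      using sd_le[OF sg cg, of "{a,c}" l] by (meson order.trans ereal_less_eq(3))
    then show ?thesis using 1(4) 2(4) by simp
  qed
qed

lemma splice:
  assumes "ys1 \<noteq> []" "hd ys1 = r" "last ys1 = r" "a \<in> set ys1" "ys2 \<noteq> []" "hd ys2 = b" "last ys2 = b"
  shows "\<exists>ys. ys \<noteq> [] \<and> hd ys = r \<and> last ys = r \<and> set ys = set ys1 \<union> set ys2 \<and>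
     pcost D ys = pcost D ys1 + pcost D ys2 + D a b + D b a"
proof -
  obtain p q where pq: "ys1 = p @ a # q" using assms(4) by (meson split_list)
  obtain t where t: "ys2 = b # t" using assms(5,6) by (cases ys2) auto
  define ys where "ys = p @ a # (ys2 @ a # q)"
  have e1: "pcost D ys = pcost D (p @ [a]) + pcost D (a # ys2 @ a # q)"
    unfolding ys_def by (rule pcost_append)
  have e2: "pcost D (a # ys2 @ a # q) = D a b + pcost D (ys2 @ a # q)"
    using t by simp
  have e3: "pcost D (ys2 @ a # q) = pcost D (ys2 @ [a]) + pcost D (a # q)"
    by (rule pcost_append)
  have e4: "pcost D (ys2 @ [a]) = pcost D ys2 + D b a"
    using pcost_snoc[OF assms(5), of D a] assms(7) by simp
  have c1: "pcost D ys = pcost D (p @ [a]) + (D a b + (pcost D ys2 + D b a + pcost D (a # q)))"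
    using e1 e2 e3 e4 by simp
  have c2: "pcost D ys1 = pcost D (p @ [a]) + pcost D (a # q)" unfolding pq by (rule pcost_append)
  have "pcost D ys = pcost D ys1 + pcost D ys2 + D a b + D b a" using c1 c2 by (simp add: ac_simps)
  moreover have "hd ys = r" using assms(2) pq unfolding ys_def by (cases p) auto
  moreover have "last ys = r" using assms(3) pq unfolding ys_def by (cases q) auto
  moreover have "set ys = set ys1 \<union> set ys2" using pq unfolding ys_def by auto
  ultimately show ?thesis unfolding ys_def by blast
qed



lemma walk:
  assumes mg: "multigraph V E ends" and lf: "\<forall>e\<in>E. l e > 0"
  shows "subgraph VS ES V E ends \<Longrightarrow> connected_graph VS ES ends \<Longrightarrow> r \<in> VS \<Longrightarrow>
    \<exists>ys. ys \<noteq> [] \<and> hd ys = r \<and> last ys = r \<and> set ys = VS \<and>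
      pcost (\<lambda>a b. steiner_dist V E ends l {a,b}) ys \<le> ereal (2 * sum l ES)"
proof (induction "card ES" arbitrary: VS ES r rule: less_induct)
  case less
  let ?D = "\<lambda>a b. steiner_dist V E ends l {a,b}"
  have finE: "finite E" and finV: "finite V" using mg unfolding multigraph_def by auto
  have ESE: "ES \<subseteq> E" and VSV: "VS \<subseteq> V" and endsVS: "\<forall>f\<in>ES. ends f \<subseteq> VS"
    using less(2) unfolding subgraph_def by auto
  have finES: "finite ES" using ESE finE by (rule finite_subset)
  have nn: "\<And>F. F \<subseteq> E \<Longrightarrow> 0 \<le> sum l F" using lf by (meson less_imp_le subsetD sum_nonneg)
  show ?case
  proof (cases "ES = {}")
    case True
    have "VS = {r}"
    proof -
      have "x = r" if "x \<in> VS" for x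
        using less(3,4) that True unfolding connected_graph_def adj_def by auto
      then show ?thesis using less(4) by blast
    qed
    then show ?thesis using True by (intro exI[of _ "[r]"]) auto
  next
    case False
    then obtain e where e: "e \<in> ES" by auto
    have "card (ends e) = 2" using mg e ESE unfolding multigraph_def by auto
    then obtain u w where uw: "ends e = {u,w}" "u \<noteq> w" by (meson card_2_iff)
    have uV: "u \<in> VS" "w \<in> VS" using endsVS e uw by auto
    define ES' where "ES' = ES - {e}"
    define Ru where "Ru = {x\<in>VS. (u,x) \<in> (adj ES' ends)\<^sup>*}"
    define Rw where "Rw = {x\<in>VS. (w,x) \<in> (adj ES' ends)\<^sup>*}"
    have cover: "x \<in> Ru \<or> x \<in> Rw" if "x \<in> VS" for x
    proof -
      have "(u,x) \<in> (adj ES ends)\<^sup>*" using less(3) uV that unfolding connected_graph_def by auto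
      then show ?thesis using decomp[of u x ES ends e w, OF _ uw(1)] that unfolding Ru_def Rw_def ES'_def by blast
    qed
    have cardlt: "card ES' < card ES" unfolding ES'_def using e finES by (metis card_Diff1_less)
    have sumES: "sum l ES = l e + sum l ES'" unfolding ES'_def using e finES by (simp add: sum.remove)
    have le0: "l e > 0" using lf e ESE by auto
    have ES'E: "ES' \<subseteq> E" using ESE unfolding ES'_def by auto
    have Duw: "?D u w \<le> ereal (l e)" "?D w u \<le> ereal (l e)"
    proof -
      have sg: "subgraph {u,w} {e} V E ends" using uV VSV uw e ESE unfolding subgraph_def by auto
      have "?D u w \<le> ereal (sum l {e})" by (rule sd_le[OF sg edge_conn[of ends e u w, OF uw(1)]]) auto
      then show "?D u w \<le> ereal (l e)" "?D w u \<le> ereal (l e)" by (auto simp: insert_commute)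
    qed
    show ?thesis
    proof (cases "w \<in> Ru")
      case True
      have conn: "connected_graph VS ES' ends"
        unfolding connected_graph_def
      proof (intro conjI ballI)
        show "VS \<noteq> {}" using uV by auto
      next
        fix x y assume xy: "x \<in> VS" "y \<in> VS"
        have reach: "(u,z) \<in> (adj ES' ends)\<^sup>*" if "z \<in> VS" for z
        proof -
          have uw': "(u,w) \<in> (adj ES' ends)\<^sup>*" using True unfolding Ru_def by simp
          show ?thesis
          proof (cases "z \<in> Ru")
            case True then show ?thesis unfolding Ru_def by simp
          next
            case False
            then have "(w,z) \<in> (adj ES' ends)\<^sup>*" using cover[OF that] unfolding Rw_def by simp
            then show ?thesis using uw' by (rule rtrancl_trans[rotated])
          qed
        qed
        show "(x,y) \<in> (adj ES' ends)\<^sup>*" using rt_sym[OF reach[OF xy(1)]] reach[OF xy(2)]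
          by (rule rtrancl_trans)
      qed
      have sg: "subgraph VS ES' V E ends" using less(2) unfolding subgraph_def ES'_def by auto
      obtain ys where ys: "ys \<noteq> []" "hd ys = r" "last ys = r" "set ys = VS"
          "pcost ?D ys \<le> ereal (2 * sum l ES')"
        using less(1)[OF cardlt sg conn less(4)] by blast
      have "ereal (2 * sum l ES') \<le> ereal (2 * sum l ES)" using sumES le0 by simp
      then show ?thesis using ys by (intro exI[of _ ys]) (meson order.trans)
    next
      case False
      define EU where "EU = {f\<in>ES'. ends f \<subseteq> Ru}"
      define EW where "EW = {f\<in>ES'. ends f \<subseteq> Rw}"
      have endsES': "\<forall>f\<in>ES'. ends f \<subseteq> VS" using endsVS unfolding ES'_def by auto
      have cU: "connected_graph Ru EU ends" unfolding Ru_def EU_def by (rule comp_conn[OF endsES' uV(1)])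
      have cW: "connected_graph Rw EW ends" unfolding Rw_def EW_def by (rule comp_conn[OF endsES' uV(2)])
      have sU: "subgraph Ru EU V E ends" using VSV ES'E unfolding subgraph_def EU_def Ru_def by auto
      have sW: "subgraph Rw EW V E ends" using VSV ES'E unfolding subgraph_def EW_def Rw_def by auto
      have uRu: "u \<in> Ru" and wRw: "w \<in> Rw" using uV unfolding Ru_def Rw_def by auto
      have disj: "Ru \<inter> Rw = {}"
      proof (rule ccontr)
        assume "Ru \<inter> Rw \<noteq> {}"
        then obtain x where "(u,x) \<in> (adj ES' ends)\<^sup>*" "(w,x) \<in> (adj ES' ends)\<^sup>*" unfolding Ru_def Rw_def by auto
        then have "(u,w) \<in> (adj ES' ends)\<^sup>*" using rt_sym rtrancl_trans by metis
        then show False using False uV unfolding Ru_def by auto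
      qed
      have EUW: "EU \<inter> EW = {}"
      proof (rule ccontr)
        assume "EU \<inter> EW \<noteq> {}"
        then obtain f where f: "f \<in> ES'" "ends f \<subseteq> Ru" "ends f \<subseteq> Rw" unfolding EU_def EW_def by auto
        have "card (ends f) = 2" using mg f(1) ES'E unfolding multigraph_def by auto
        then have "ends f \<noteq> {}" by auto
        then show False using f disj by auto
      qed
      have finEU: "finite EU" "finite EW" using finES unfolding EU_def EW_def ES'_def by auto
      have sumUW: "sum l EU + sum l EW \<le> sum l ES'"
      proof -
        have "sum l EU + sum l EW = sum l (EU \<union> EW)" by (rule sum.union_disjoint[OF finEU EUW, symmetric])
        also have "\<dots> \<le> sum l ES'"
          using finES ES'E lf unfolding EU_def EW_def ES'_def
          by (intro sum_mono2) (auto intro: less_imp_le)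
        finally show ?thesis .
      qed
      have cEU: "card EU < card ES" "card EW < card ES"
      proof -
        have f': "finite ES'" using finES unfolding ES'_def by simp
        have "card EU \<le> card ES'" "card EW \<le> card ES'"
          using card_mono[OF f'] unfolding EU_def EW_def by auto
        then show "card EU < card ES" "card EW < card ES" using cardlt by auto
      qed
      obtain ys where ys: "ys \<noteq> []" "hd ys = r" "last ys = r" "set ys = Ru \<union> Rw"
          "pcost ?D ys \<le> ereal (2 * sum l EU) + ereal (2 * sum l EW) + ereal (l e) + ereal (l e)"
      proof (cases "r \<in> Ru")
        case True
        obtain ys1 where y1: "ys1 \<noteq> []" "hd ys1 = r" "last ys1 = r" "set ys1 = Ru"
            "pcost ?D ys1 \<le> ereal (2 * sum l EU)"
          using less(1)[OF cEU(1) sU cU True] by blast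
        obtain ys2 where y2: "ys2 \<noteq> []" "hd ys2 = w" "last ys2 = w" "set ys2 = Rw"
            "pcost ?D ys2 \<le> ereal (2 * sum l EW)"
          using less(1)[OF cEU(2) sW cW wRw] by blast
        obtain ys where "ys \<noteq> []" "hd ys = r" "last ys = r" "set ys = set ys1 \<union> set ys2"
            "pcost ?D ys = pcost ?D ys1 + pcost ?D ys2 + ?D u w + ?D w u"
          using splice[OF y1(1-3) _ y2(1-3), of u ?D] y1(4) uRu by auto
        moreover have "pcost ?D ys1 + pcost ?D ys2 + ?D u w + ?D w u \<le>
             ereal (2 * sum l EU) + ereal (2 * sum l EW) + ereal (l e) + ereal (l e)"
          using y1(5) y2(5) Duw by (intro add_mono) auto
        ultimately show ?thesis using that y1(4) y2(4) by auto
      next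
        case False
        then have rW: "r \<in> Rw" using cover less(4) by auto
        obtain ys1 where y1: "ys1 \<noteq> []" "hd ys1 = r" "last ys1 = r" "set ys1 = Rw"
            "pcost ?D ys1 \<le> ereal (2 * sum l EW)"
          using less(1)[OF cEU(2) sW cW rW] by blast
        obtain ys2 where y2: "ys2 \<noteq> []" "hd ys2 = u" "last ys2 = u" "set ys2 = Ru"
            "pcost ?D ys2 \<le> ereal (2 * sum l EU)"
          using less(1)[OF cEU(1) sU cU uRu] by blast
        obtain ys where "ys \<noteq> []" "hd ys = r" "last ys = r" "set ys = set ys1 \<union> set ys2"
            "pcost ?D ys = pcost ?D ys1 + pcost ?D ys2 + ?D w u + ?D u w"
          using splice[OF y1(1-3) _ y2(1-3), of w ?D] y1(4) wRw by auto
        moreover have "pcost ?D ys1 + pcost ?D ys2 + ?D w u + ?D u w \<le>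
             ereal (2 * sum l EW) + ereal (2 * sum l EU) + ereal (l e) + ereal (l e)"
          using y1(5) y2(5) Duw by (intro add_mono) auto
        ultimately show ?thesis using that y1(4) y2(4) by (auto simp: ac_simps)
      qed
      have RV: "Ru \<union> Rw = VS" using cover unfolding Ru_def Rw_def by auto
      have "ereal (2 * sum l EU) + ereal (2 * sum l EW) + ereal (l e) + ereal (l e) \<le> ereal (2 * sum l ES)"
        using sumUW sumES by simp
      then have "pcost ?D ys \<le> ereal (2 * sum l ES)" using ys(5) by (rule order.trans[rotated])
      then show ?thesis using ys(1-4) RV by (intro exI[of _ ys]) simp
    qed
  qed
qed



lemma path_exists:
  assumes "(u,w) \<in> R\<^sup>*"
  shows "\<exists>vs. vs \<noteq> [] \<and> hd vs = u \<and> last vs = w \<and> distinct vs \<and>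
           successively (\<lambda>x y. (x,y) \<in> R) vs \<and> set vs \<subseteq> insert u (Range R)"
  using assms
proof (induction rule: rtrancl_induct)
  case base
  then show ?case by (intro exI[of _ "[u]"]) auto
next
  case (step y z)
  then obtain vs where vs: "vs \<noteq> []" "hd vs = u" "last vs = y" "distinct vs"
    "successively (\<lambda>x y. (x,y) \<in> R) vs" "set vs \<subseteq> insert u (Range R)" by blast
  show ?case
  proof (cases "z \<in> set vs")
    case True
    then obtain p q where pq: "vs = p @ z # q" by (meson split_list)
    have s: "successively (\<lambda>x y. (x,y) \<in> R) (p @ [z])"
      using vs(5) unfolding pq by (auto simp: successively_append_iff successively_Cons)
    have h: "hd (p @ [z]) = u" using vs(2) pq by (cases p) auto
    have "distinct (p @ [z])" using vs(4) unfolding pq by simp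
    moreover have "set (p @ [z]) \<subseteq> insert u (Range R)" using vs(6) unfolding pq by auto
    ultimately show ?thesis using s h by (intro exI[of _ "p @ [z]"]) simp
  next
    case False
    have s: "successively (\<lambda>x y. (x,y) \<in> R) (vs @ [z])"
      using vs(1,3,5) step(2) by (auto simp: successively_append_iff)
    have "hd (vs @ [z]) = u" using vs(1,2) by simp
    moreover have "last (vs @ [z]) = z" by simp
    moreover have "distinct (vs @ [z])" using vs(4) False by simp
    moreover have "set (vs @ [z]) \<subseteq> insert u (Range R)" using vs(6) step(2) by auto
    ultimately show ?thesis using s by (intro exI[of _ "vs @ [z]"]) blast
  qed
qed

lemma tree_bridge:
  assumes tree: "is_tree VT ET ends" and sub: "\<forall>f\<in>ET. ends f \<subseteq> VT"
    and e: "e \<in> ET" "ends e = {u,w}" "u \<noteq> w"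
  shows "(u,w) \<notin> (adj (ET - {e}) ends)\<^sup>*"
proof
  let ?R = "adj (ET - {e}) ends"
  assume H: "(u,w) \<in> ?R\<^sup>*"
  obtain vs where vs: "vs \<noteq> []" "hd vs = u" "last vs = w" "distinct vs"
     "successively (\<lambda>x y. (x,y) \<in> ?R) vs" "set vs \<subseteq> insert u (Range ?R)"
    using path_exists[OF H] by (elim exE conjE) blast
  define k where "k = length vs"
  have k2: "k \<ge> 2"
  proof -
    have "k \<noteq> 0" using vs(1) unfolding k_def by auto
    moreover have "k \<noteq> 1"
    proof
      assume "k = 1"
      then obtain x where "vs = [x]" unfolding k_def by (cases vs) auto
      then show False using vs(2,3) e(3) by auto
    qed
    ultimately show ?thesis by linarith
  qed
  define g where "g i = (SOME f. f \<in> ET - {e} \<and> ends f = {vs ! i, vs ! Suc i})" for i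
  have g: "g i \<in> ET - {e} \<and> ends (g i) = {vs ! i, vs ! Suc i}" if "Suc i < k" for i
  proof -
    have "(vs ! i, vs ! Suc i) \<in> ?R" using successively_nth[OF vs(5)] that unfolding k_def by blast
    then have "\<exists>f. f \<in> ET - {e} \<and> ends f = {vs ! i, vs ! Suc i}" unfolding adj_def by auto
    then show ?thesis unfolding g_def by (rule someI_ex)
  qed
  define es where "es = map g [0..<k-1] @ [e]"
  have les: "length es = k" unfolding es_def using k2 by simp
  have es_nth: "es ! i = (if i < k - 1 then g i else e)" if "i < k" for i
    unfolding es_def using that k2 by (auto simp: nth_append)
  have "has_cycle VT ET ends"
    unfolding has_cycle_def
  proof (intro exI[of _ vs] exI[of _ es] conjI allI impI)
    show "length vs = length es" using les k_def by simp
    show "2 \<le> length vs" using k2 k_def by simp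
    show "distinct vs" by (rule vs(4))
    show "distinct es"
    proof -
      have "distinct (map g [0..<k-1])"
        unfolding distinct_map
      proof
        show "inj_on g (set [0..<k-1])"
        proof (rule inj_onI)
          fix i j assume ij: "i \<in> set [0..<k-1]" "j \<in> set [0..<k-1]" "g i = g j"
          have "{vs ! i, vs ! Suc i} = {vs ! j, vs ! Suc j}" using g[of i] g[of j] ij by auto
          moreover have "i < k" "Suc i < k" "j < k" "Suc j < k" using ij by auto
          ultimately show "i = j" using vs(4) unfolding k_def
            by (auto simp: doubleton_eq_iff nth_eq_iff_index_eq)
        qed
      qed simp
      moreover have "e \<notin> set (map g [0..<k-1])"
      proof
        assume "e \<in> set (map g [0..<k-1])"
        then obtain i where i: "i < k - 1" "e = g i" by auto
        then have "Suc i < k" by simp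
        from g[OF this] i(2) show False by simp
      qed
      ultimately show ?thesis unfolding es_def by simp
    qed
    show "set vs \<subseteq> VT"
    proof -
      have "Range ?R \<subseteq> VT" using sub unfolding adj_def by auto
      moreover have "u \<in> VT" using sub e by auto
      ultimately show ?thesis using vs(6) by blast
    qed
    show "set es \<subseteq> ET" using g e(1) unfolding es_def by auto
    fix i assume i: "i < length vs"
    show "ends (es ! i) = {vs ! i, vs ! ((i + 1) mod length vs)}"
    proof (cases "i < k - 1")
      case True
      then have "(i + 1) mod length vs = Suc i" using k_def by simp
      then show ?thesis using es_nth[of i] g[of i] True i k_def by auto
    next
      case False
      then have ik: "i = k - 1" using i k_def by simp
      then have "i + 1 = length vs" using k_def k2 by (simp add: Suc_diff_1)
      moreover have "vs ! 0 = u" using vs(1,2) by (simp add: hd_conv_nth)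
      moreover have "vs ! i = w" using vs(1,3) ik k_def by (simp add: last_conv_nth)
      ultimately show ?thesis using es_nth[of i] False i k_def e(2) by (auto simp: insert_commute)
    qed
  qed
  then show False using tree unfolding is_tree_def by blast
qed



fun cr :: "('v \<Rightarrow> 'v \<Rightarrow> bool) \<Rightarrow> 'v list \<Rightarrow> nat" where
  "cr S (a # b # xs) = (if S a b then 1 else 0) + cr S (b # xs)"
| "cr S _ = 0"

lemma cr0:
  "cr (\<lambda>a b. (a,b) \<notin> (adj F ends)\<^sup>*) ys = 0 \<Longrightarrow> ys \<noteq> [] \<Longrightarrow> \<forall>x\<in>set ys. (hd ys, x) \<in> (adj F ends)\<^sup>*"
proof (induction ys rule: induct_list012)
  case 1 then show ?case by simp
next
  case (2 x) then show ?case by simp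
next
  case (3 a b xs)
  then have ab: "(a,b) \<in> (adj F ends)\<^sup>*" and c: "cr (\<lambda>a b. (a,b) \<notin> (adj F ends)\<^sup>*) (b # xs) = 0"
    by (auto split: if_splits)
  have H: "\<forall>x\<in>set (b#xs). (b, x) \<in> (adj F ends)\<^sup>*" using 3(2)[OF c] by simp
  show ?case
  proof
    fix x assume "x \<in> set (a#b#xs)"
    then have "x = a \<or> x \<in> set (b#xs)" by auto
    then show "(hd (a#b#xs), x) \<in> (adj F ends)\<^sup>*"
    proof
      assume "x \<in> set (b#xs)"
      then have "(b,x) \<in> (adj F ends)\<^sup>*" using H by blast
      then show ?thesis using ab by simp
    qed simp
  qed
qed

lemma cr1:
  "cr (\<lambda>a b. (a,b) \<notin> (adj F ends)\<^sup>*) ys \<le> 1 \<Longrightarrow> ys \<noteq> [] \<Longrightarrow> (hd ys, last ys) \<in> (adj F ends)\<^sup>* \<Longrightarrow>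
   \<forall>x\<in>set ys. (hd ys, x) \<in> (adj F ends)\<^sup>*"
proof (induction ys rule: induct_list012)
  case 1 then show ?case by simp
next
  case (2 x) then show ?case by simp
next
  case (3 a b xs)
  let ?Q = "(adj F ends)\<^sup>*"
  show ?case
  proof (cases "(a,b) \<in> ?Q")
    case True
    then have c: "cr (\<lambda>a b. (a,b) \<notin> ?Q) (b # xs) \<le> 1" using 3(3) by simp
    have "(a, last (b#xs)) \<in> ?Q" using 3(5) by simp
    then have "(b, last (b#xs)) \<in> ?Q" using rt_sym[OF True] by (rule rtrancl_trans[rotated])
    then have H: "\<forall>x\<in>set (b#xs). (b, x) \<in> ?Q" using 3(2)[OF c] by simp
    show ?thesis
    proof
      fix x assume "x \<in> set (a#b#xs)"
      then have "x = a \<or> x \<in> set (b#xs)" by auto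
      then show "(hd (a#b#xs), x) \<in> ?Q"
      proof
        assume "x \<in> set (b#xs)"
        then have "(b,x) \<in> ?Q" using H by blast
        then show ?thesis using True by simp
      qed simp
    qed
  next
    case False
    then have c: "cr (\<lambda>a b. (a,b) \<notin> ?Q) (b # xs) = 0" using 3(3) by simp
    have "(b, last (b#xs)) \<in> ?Q" using cr0[OF c] by simp
    moreover have "(a, last (b#xs)) \<in> ?Q" using 3(5) by simp
    ultimately have "(a,b) \<in> ?Q" using rt_sym rtrancl_trans by fast
    then show ?thesis using False by simp
  qed
qed

lemma cr2:
  assumes "ys \<noteq> []" "hd ys = last ys" "a \<in> set ys" "b \<in> set ys" "(a,b) \<notin> (adj F ends)\<^sup>*"
  shows "2 \<le> cr (\<lambda>a b. (a,b) \<notin> (adj F ends)\<^sup>*) ys"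
proof (rule ccontr)
  assume "\<not> ?thesis"
  then have "cr (\<lambda>a b. (a,b) \<notin> (adj F ends)\<^sup>*) ys \<le> 1" by simp
  moreover have "(hd ys, last ys) \<in> (adj F ends)\<^sup>*" using assms(2) by simp
  ultimately have all: "\<forall>x\<in>set ys. (hd ys, x) \<in> (adj F ends)\<^sup>*" using cr1[OF _ assms(1)] by blast
  have "(hd ys, a) \<in> (adj F ends)\<^sup>*" using all assms(3) by blast
  then have "(a, hd ys) \<in> (adj F ends)\<^sup>*" by (rule rt_sym)
  moreover have "(hd ys, b) \<in> (adj F ends)\<^sup>*" using all assms(4) by blast
  ultimately have "(a,b) \<in> (adj F ends)\<^sup>*" by (rule rtrancl_trans)
  then show False using assms(5) by simp
qed

lemma sep_in:
  assumes "subgraph VS ES VT ET ends" "connected_graph VS ES ends" "a \<in> VS" "b \<in> VS"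
    "(a,b) \<notin> (adj (ET - {e}) ends)\<^sup>*"
  shows "e \<in> ES"
proof (rule ccontr)
  assume "e \<notin> ES"
  then have "ES \<subseteq> ET - {e}" using assms(1) unfolding subgraph_def by auto
  moreover have "(a,b) \<in> (adj ES ends)\<^sup>*" using assms(2-4) unfolding connected_graph_def by auto
  ultimately have "(a,b) \<in> (adj (ET - {e}) ends)\<^sup>*" by (rule rt_mono)
  then show False using assms(5) by simp
qed

lemma pc_ge:
  assumes fin: "finite ET" and nn: "\<forall>e\<in>ET. l e \<ge> 0"
  shows "ereal (\<Sum>e\<in>ET. l e * real (cr (\<lambda>a b. (a,b) \<notin> (adj (ET - {e}) ends)\<^sup>*) ys))
         \<le> pcost (\<lambda>a b. steiner_dist VT ET ends l {a,b}) ys"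
proof (induction ys rule: induct_list012)
  case 1 then show ?case by simp
next
  case (2 x) then show ?case by simp
next
  case (3 a b xs)
  let ?S = "\<lambda>e a b. (a,b) \<notin> (adj (ET - {e}) ends)\<^sup>*"
  have first: "ereal (\<Sum>e\<in>ET. l e * (if ?S e a b then 1 else 0)) \<le> steiner_dist VT ET ends l {a,b}"
  proof (rule sd_ge)
    fix VS ES assume sg: "subgraph VS ES VT ET ends" and cg: "connected_graph VS ES ends" and ab: "{a,b} \<subseteq> VS"
    have "(\<Sum>e\<in>ET. l e * (if ?S e a b then 1 else 0)) = (\<Sum>e\<in>{e\<in>ET. ?S e a b}. l e)"
      using fin by (simp add: sum.inter_filter[symmetric] if_distrib cong: if_cong)
    also have "\<dots> \<le> sum l ES"
    proof (rule sum_mono2)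
      show "finite ES" using sg fin unfolding subgraph_def by (auto intro: finite_subset)
      show "{e\<in>ET. ?S e a b} \<subseteq> ES" using sep_in[OF sg cg] ab by auto
      show "\<And>e. e \<in> ES - {e\<in>ET. ?S e a b} \<Longrightarrow> 0 \<le> l e" using sg nn unfolding subgraph_def by auto
    qed
    finally show "ereal (\<Sum>e\<in>ET. l e * (if ?S e a b then 1 else 0)) \<le> ereal (sum l ES)" by simp
  qed
  have "(\<Sum>e\<in>ET. l e * real (cr (?S e) (a # b # xs))) =
        (\<Sum>e\<in>ET. l e * (if ?S e a b then 1 else 0)) + (\<Sum>e\<in>ET. l e * real (cr (?S e) (b # xs)))"
    by (auto simp: sum.distrib[symmetric] distrib_left intro!: sum.cong)
  then have "ereal (\<Sum>e\<in>ET. l e * real (cr (?S e) (a # b # xs))) =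
        ereal (\<Sum>e\<in>ET. l e * (if ?S e a b then 1 else 0)) + ereal (\<Sum>e\<in>ET. l e * real (cr (?S e) (b # xs)))"
    by simp
  also have "\<dots> \<le> steiner_dist VT ET ends l {a,b} + pcost (\<lambda>a b. steiner_dist VT ET ends l {a,b}) (b # xs)"
    using first 3(2) by (rule add_mono)
  finally show ?case by simp
qed



lemma min_bound:
  assumes fin: "finite ET" and sub: "\<forall>f\<in>ET. ends f \<subseteq> VT" and c2: "\<forall>f\<in>ET. card (ends f) = 2"
    and tree: "is_tree VT ET ends" and nn: "\<forall>e\<in>ET. l e \<ge> 0" and A: "A \<subseteq> VT" "A \<noteq> {}"
  shows "steiner_dist VT ET ends l A \<le>
    ereal (\<Sum>e\<in>{e\<in>ET. \<exists>a\<in>A. \<exists>b\<in>A. (a,b) \<notin> (adj (ET-{e}) ends)\<^sup>*}. l e)"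
proof -
  let ?Sep = "{e\<in>ET. \<exists>a\<in>A. \<exists>b\<in>A. (a,b) \<notin> (adj (ET-{e}) ends)\<^sup>*}"
  define P where "P = (\<lambda>p. subgraph (fst p) (snd p) VT ET ends \<and> connected_graph (fst p) (snd p) ends \<and> A \<subseteq> fst p)"
  have "P (VT,ET)" using sub tree A unfolding P_def subgraph_def is_tree_def by auto
  then obtain p where p: "P p" and pmin: "\<forall>q. P q \<longrightarrow> card (snd p) \<le> card (snd q)"
    using ex_has_least_nat[of P "(VT,ET)" "\<lambda>p. card (snd p)"] by blast
  obtain VS ES where pe: "p = (VS,ES)" by (cases p)
  have sg: "subgraph VS ES VT ET ends" and cg: "connected_graph VS ES ends" and AVS: "A \<subseteq> VS"
    using p unfolding P_def pe by auto
  have ESsub: "ES \<subseteq> ?Sep"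
  proof
    fix e assume eES: "e \<in> ES"
    show "e \<in> ?Sep"
    proof (rule ccontr)
      assume ns: "e \<notin> ?Sep"
      have eET: "e \<in> ET" using sg eES unfolding subgraph_def by auto
      then have allc: "\<forall>a\<in>A. \<forall>b\<in>A. (a,b) \<in> (adj (ET - {e}) ends)\<^sup>*" using ns by auto
      define ES' where "ES' = ES - {e}"
      obtain a0 where a0: "a0 \<in> A" using A(2) by auto
      obtain u0 w0 where uw0: "ends e = {u0,w0}" "u0 \<noteq> w0" using c2 eET by (meson card_2_iff)
      have u0VS: "u0 \<in> VS" using sg eES uw0 unfolding subgraph_def by auto
      have "(u0,a0) \<in> (adj ES ends)\<^sup>*" using cg u0VS a0 AVS unfolding connected_graph_def by auto
      then have "(u0,a0) \<in> (adj ES' ends)\<^sup>* \<or> (w0,a0) \<in> (adj ES' ends)\<^sup>*"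
        using decomp[of u0 a0 ES ends e w0, OF _ uw0(1)] unfolding ES'_def by blast
      then obtain u w where uw: "ends e = {u,w}" "u \<noteq> w" "(u,a0) \<in> (adj ES' ends)\<^sup>*"
        using uw0 by (metis insert_commute)
      define Ru where "Ru = {x\<in>VS. (u,x) \<in> (adj ES' ends)\<^sup>*}"
      define EU where "EU = {f\<in>ES'. ends f \<subseteq> Ru}"
      have uVS: "u \<in> VS" using sg eES uw unfolding subgraph_def by auto
      have endsES': "\<forall>f\<in>ES'. ends f \<subseteq> VS" using sg unfolding subgraph_def ES'_def by auto
      have cU: "connected_graph Ru EU ends" unfolding Ru_def EU_def by (rule comp_conn[OF endsES' uVS])
      have sU: "subgraph Ru EU VT ET ends" using sg unfolding subgraph_def EU_def Ru_def ES'_def by auto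
      have bridge: "(u,w) \<notin> (adj (ET-{e}) ends)\<^sup>*" by (rule tree_bridge[OF tree sub eET uw(1) uw(2)])
      have ES'ET: "ES' \<subseteq> ET - {e}" using sg unfolding subgraph_def ES'_def by auto
      have ARu: "A \<subseteq> Ru"
      proof
        fix b assume b: "b \<in> A"
        have bVS: "b \<in> VS" using b AVS by auto
        have "(u,b) \<in> (adj ES ends)\<^sup>*" using cg uVS bVS unfolding connected_graph_def by auto
        then have "(u,b) \<in> (adj ES' ends)\<^sup>* \<or> (w,b) \<in> (adj ES' ends)\<^sup>*"
          using decomp[of u b ES ends e w, OF _ uw(1)] unfolding ES'_def by blast
        then show "b \<in> Ru"
        proof
          assume "(u,b) \<in> (adj ES' ends)\<^sup>*" then show ?thesis unfolding Ru_def using bVS by simp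
        next
          assume wb: "(w,b) \<in> (adj ES' ends)\<^sup>*"
          have 1: "(u,a0) \<in> (adj (ET-{e}) ends)\<^sup>*" by (rule rt_mono[OF ES'ET uw(3)])
          have 2: "(a0,b) \<in> (adj (ET-{e}) ends)\<^sup>*" using allc a0 b by blast
          have 3: "(b,w) \<in> (adj (ET-{e}) ends)\<^sup>*" by (rule rt_mono[OF ES'ET rt_sym[OF wb]])
          have "(u,b) \<in> (adj (ET-{e}) ends)\<^sup>*" using 1 2 by (rule rtrancl_trans)
          then have "(u,w) \<in> (adj (ET-{e}) ends)\<^sup>*" using 3 by (rule rtrancl_trans)
          then show ?thesis using bridge by simp
        qed
      qed
      have "P (Ru,EU)" using sU cU ARu unfolding P_def by simp
      then have "card ES \<le> card EU" using pmin pe by force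
      moreover have "card EU < card ES"
      proof -
        have fES: "finite ES" using sg fin unfolding subgraph_def by (auto intro: finite_subset)
        have "card EU \<le> card ES'" using fES unfolding EU_def ES'_def by (intro card_mono) auto
        moreover have "card ES' < card ES" unfolding ES'_def using fES eES by (metis card_Diff1_less)
        ultimately show ?thesis by simp
      qed
      ultimately show False by simp
    qed
  qed
  have "steiner_dist VT ET ends l A \<le> ereal (sum l ES)" by (rule sd_le[OF sg cg AVS])
  also have "sum l ES \<le> sum l ?Sep"
  proof (rule sum_mono2)
    show "finite ?Sep" using fin by simp
    show "ES \<subseteq> ?Sep" by (rule ESsub)
    show "\<And>e. e \<in> ?Sep - ES \<Longrightarrow> 0 \<le> l e" using nn by auto
  qed
  then have "ereal (sum l ES) \<le> ereal (sum l ?Sep)" by simp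
  finally show ?thesis .
qed

lemma tour_bound:
  assumes fin: "finite ET" and sub: "\<forall>f\<in>ET. ends f \<subseteq> VT" and c2: "\<forall>f\<in>ET. card (ends f) = 2"
    and tree: "is_tree VT ET ends" and nn: "\<forall>e\<in>ET. l e \<ge> 0" and A: "A \<subseteq> VT" "A \<noteq> {}"
    and ys: "ys \<noteq> []" "hd ys = last ys" "A \<subseteq> set ys"
  shows "steiner_dist VT ET ends l A + steiner_dist VT ET ends l A
         \<le> pcost (\<lambda>a b. steiner_dist VT ET ends l {a,b}) ys"
proof -
  let ?S = "\<lambda>e a b. (a,b) \<notin> (adj (ET - {e}) ends)\<^sup>*"
  let ?Sep = "{e\<in>ET. \<exists>a\<in>A. \<exists>b\<in>A. (a,b) \<notin> (adj (ET-{e}) ends)\<^sup>*}"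
  have m: "steiner_dist VT ET ends l A \<le> ereal (sum l ?Sep)"
    by (rule min_bound[OF fin sub c2 tree nn A])
  have "sum l ?Sep + sum l ?Sep = (\<Sum>e\<in>?Sep. l e * 2)" by (simp add: sum_distrib_right[symmetric])
  also have "\<dots> \<le> (\<Sum>e\<in>?Sep. l e * real (cr (?S e) ys))"
  proof (rule sum_mono)
    fix e assume e: "e \<in> ?Sep"
    then obtain a b where ab: "a \<in> A" "b \<in> A" "(a,b) \<notin> (adj (ET-{e}) ends)\<^sup>*" by auto
    have "2 \<le> cr (?S e) ys" using cr2[OF ys(1,2) _ _ ab(3)] ab(1,2) ys(3) by blast
    then have "(2::real) \<le> real (cr (?S e) ys)" by simp
    moreover have "0 \<le> l e" using nn e by auto
    ultimately show "l e * 2 \<le> l e * real (cr (?S e) ys)" by (rule mult_left_mono)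
  qed
  also have "\<dots> \<le> (\<Sum>e\<in>ET. l e * real (cr (?S e) ys))"
  proof (rule sum_mono2)
    show "finite ET" by (rule fin)
    show "?Sep \<subseteq> ET" by auto
    show "\<And>e. e \<in> ET - ?Sep \<Longrightarrow> 0 \<le> l e * real (cr (?S e) ys)" using nn by auto
  qed
  finally have "ereal (sum l ?Sep) + ereal (sum l ?Sep) \<le> ereal (\<Sum>e\<in>ET. l e * real (cr (?S e) ys))"
    by simp
  also have "\<dots> \<le> pcost (\<lambda>a b. steiner_dist VT ET ends l {a,b}) ys" by (rule pc_ge[OF fin nn])
  finally have r: "ereal (sum l ?Sep) + ereal (sum l ?Sep) \<le> pcost (\<lambda>a b. steiner_dist VT ET ends l {a,b}) ys" .
  have "steiner_dist VT ET ends l A + steiner_dist VT ET ends l A \<le> ereal (sum l ?Sep) + ereal (sum l ?Sep)"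
    using m m by (rule add_mono)
  then show ?thesis using r by (rule order.trans)
qed

lemma last_filter: "xs \<noteq> [] \<Longrightarrow> P (last xs) \<Longrightarrow> last (filter P xs) = last xs"
proof (induction xs)
  case Nil then show ?case by simp
next
  case (Cons a xs)
  show ?case
  proof (cases "xs = []")
    case True then show ?thesis using Cons by simp
  next
    case False
    then have "P (last xs)" using Cons(3) by simp
    then have "filter P xs \<noteq> []" using False by (metis filter_empty_conv last_in_set)
    then show ?thesis using Cons(1) False \<open>P (last xs)\<close> by simp
  qed
qed

lemma pcost_cong: "(\<forall>a\<in>set xs. \<forall>b\<in>set xs. D1 a b = D2 a b) \<Longrightarrow> pcost D1 xs = pcost D2 xs"
  by (induction D1 xs rule: pcost.induct) auto

theorem theorem1:
  fixes V VT :: "'v set" and E ET :: "'e set" and ends :: "'e \<Rightarrow> 'v set" and l :: "'e \<Rightarrow> real"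
  assumes "multigraph V E ends"
    and "length_function E l"
    and "subgraph VT ET V E ends"
    and "is_tree VT ET ends"
    and "k_geodesic 2 VT ET V E ends l"
  shows "fully_geodesic VT ET V E ends l"
proof -
  note mg = assms(1)
  have finV: "finite V" and finE: "finite E" and c2E: "\<forall>e\<in>E. ends e \<subseteq> V \<and> card (ends e) = 2"
    using mg unfolding multigraph_def by auto
  have lf: "\<forall>e\<in>E. l e > 0" using assms(2) unfolding length_function_def by auto
  have nnE: "\<forall>e\<in>E. l e \<ge> 0" using lf by (auto intro: less_imp_le)
  have VTV: "VT \<subseteq> V" and ETE: "ET \<subseteq> E" and sub: "\<forall>f\<in>ET. ends f \<subseteq> VT"
    using assms(3) unfolding subgraph_def by auto
  have finET: "finite ET" using ETE finE by (rule finite_subset)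
  have c2: "\<forall>f\<in>ET. card (ends f) = 2" using c2E ETE by auto
  have nn: "\<forall>e\<in>ET. l e \<ge> 0" using nnE ETE by auto
  have tree: "is_tree VT ET ends" by (rule assms(4))
  have geo2: "steiner_dist VT ET ends l {a,b} = steiner_dist V E ends l {a,b}" if "a \<in> VT" "b \<in> VT" for a b
  proof -
    have "card {a,b} \<le> 2" by (rule order.trans[OF card_insert_le_m1]) auto
    then show ?thesis using assms(5) that unfolding k_geodesic_def by auto
  qed
  have main: "steiner_dist VT ET ends l A = steiner_dist V E ends l A" if AVT: "A \<subseteq> VT" for A
  proof (rule antisym)
    show "steiner_dist VT ET ends l A \<le> steiner_dist V E ends l A"
    proof (rule sd_ge)
      fix VS ES assume sg: "subgraph VS ES V E ends" and cg: "connected_graph VS ES ends" and AVS: "A \<subseteq> VS"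
      have ESE: "ES \<subseteq> E" using sg unfolding subgraph_def by auto
      have nnS: "0 \<le> sum l ES" using nnE ESE by (auto intro: sum_nonneg)
      show "steiner_dist VT ET ends l A \<le> ereal (sum l ES)"
      proof (cases "A = {}")
        case True
        obtain v where v: "v \<in> VT" using tree unfolding is_tree_def connected_graph_def by auto
        have "subgraph {v} {} VT ET ends" using v unfolding subgraph_def by auto
        then have "steiner_dist VT ET ends l A \<le> ereal (sum l {})"
          by (rule sd_le[OF _ single_conn]) (simp add: True)
        moreover have "ereal (sum l {}) \<le> ereal (sum l ES)" using nnS by simp
        ultimately show ?thesis by (rule order.trans)
      next
        case False
        then obtain r where rA: "r \<in> A" by auto
        have rVS: "r \<in> VS" using rA AVS by auto
        have rVT: "r \<in> VT" using rA AVT by auto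
        let ?DG = "\<lambda>a b. steiner_dist V E ends l {a,b}"
        let ?DT = "\<lambda>a b. steiner_dist VT ET ends l {a,b}"
        obtain ys where ys: "ys \<noteq> []" "hd ys = r" "last ys = r" "set ys = VS"
          "pcost ?DG ys \<le> ereal (2 * sum l ES)"
          using walk[OF mg lf sg cg rVS] by blast
        obtain t where t: "ys = r # t" using ys(1,2) by (cases ys) auto
        define zs where "zs = filter (\<lambda>x. x \<in> VT) ys"
        have zne: "zs \<noteq> []" and zhd: "hd zs = r" using t rVT unfolding zs_def by auto
        have zlast: "last zs = r" unfolding zs_def using last_filter[OF ys(1), of "\<lambda>x. x \<in> VT"] ys(3) rVT by simp
        have Azs: "A \<subseteq> set zs" using AVT AVS ys(4) unfolding zs_def by auto
        have zVT: "set zs \<subseteq> VT" unfolding zs_def by auto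
        have tri: "\<And>a b c. ?DG a c \<le> ?DG a b + ?DG b c" by (rule sd_tri[OF finV finE nnE])
        have lt: "last (r # t) = r" using ys(3) t by simp
        have f1: "pcost ?DG zs \<le> pcost ?DG ys"
          unfolding zs_def t by (rule pcost_filter[OF tri]) (simp_all only: lt rVT)
        have f2: "pcost ?DT zs = pcost ?DG zs"
        proof (rule pcost_cong, intro ballI)
          fix a b assume "a \<in> set zs" "b \<in> set zs"
          then have "a \<in> VT" "b \<in> VT" using zVT by auto
          then show "?DT a b = ?DG a b" by (rule geo2)
        qed
        have f3: "steiner_dist VT ET ends l A + steiner_dist VT ET ends l A \<le> pcost ?DT zs"
          by (rule tour_bound[OF finET sub c2 tree nn AVT False zne _ Azs]) (simp add: zhd zlast)
        have "pcost ?DT zs \<le> ereal (2 * sum l ES)" unfolding f2 using f1 ys(5) by (rule order.trans)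
        with f3 have le2: "steiner_dist VT ET ends l A + steiner_dist VT ET ends l A \<le> ereal (2 * sum l ES)"
          by (rule order.trans)
        have ge0: "0 \<le> steiner_dist VT ET ends l A" by (rule sd_nonneg[OF nn])
        show ?thesis
        proof (cases "steiner_dist VT ET ends l A")
          case (real x)
          then show ?thesis using le2 by simp
        next
          case PInf
          then show ?thesis using le2 by simp
        next
          case MInf
          then show ?thesis using ge0 by simp
        qed
      qed
    qed
  next
    show "steiner_dist V E ends l A \<le> steiner_dist VT ET ends l A"
    proof (rule sd_ge)
      fix VS ES assume sg: "subgraph VS ES VT ET ends" and cg: "connected_graph VS ES ends" and AVS: "A \<subseteq> VS"
      have "subgraph VS ES V E ends" using sg VTV ETE unfolding subgraph_def by auto
      then show "steiner_dist V E ends l A \<le> ereal (sum l ES)" by (rule sd_le[OF _ cg AVS])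
    qed
  qed
  show ?thesis unfolding fully_geodesic_def k_geodesic_def using main by blast
qed

end
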